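(* Let $\mathbb{K}\in\{\mathbb{R},\mathbb{C}\}$ and let $\mathcal{X}$ be a topological $\mathbb{K}$-vector space whose topological dual $\mathcal{X}^{\ast}$ separates the points of $\mathcal{X}$. Let $\mathcal{V}_1,\mathcal{V}_2\in\mathcal{C}$ be cylinders such that $\mathbf{B}_{\mathcal{V}_1}(\mathcal{X}^{\ast})\subsetneq\mathbf{B}_{\mathcal{V}_2}(\mathcal{X}^{\ast})$. Then for every $F_1\in\mathbf{B}_{\mathcal{V}_1}(\mathcal{X}^{\ast})$ and every $F_2\in\mathbf{B}_{\mathcal{V}_2}(\mathcal{X}^{\ast})\setminus\mathbf{B}_{\mathcal{V}_1}(\mathcal{X}^{\ast})$ there is $A\in\mathcal{X}$ with $d_H^{(A)}(F_1,F_2)=\infty$. In particular, for every $B\in\mathbf{B}(\mathcal{X}^{\ast})$ and every $F\in\mathbf{F}(\mathcal{X}^{\ast})\setminus\mathbf{B}(\mathcal{X}^{\ast})$ there is $A\in\mathcal{X}$ with $d_H^{(A)}(B,F)=\infty$.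
   Context: Topological vector spaces are Hausdorff (Rudin's definition). $\mathcal{X}^{\ast}$ carries the weak* topology $\sigma(\mathcal{X}^{\ast},\mathcal{X})$. $\mathbf{F}(\mathcal{X}^{\ast})$ is the set of nonempty weak*-closed subsets of $\mathcal{X}^{\ast}$. For $A\in\mathcal{X}$ and $F,\tilde F\in\mathbf{F}(\mathcal{X}^{\ast})$, $d_H^{(A)}(F,\tilde F)=\max\{\sup_{\sigma\in F}\inf_{\tilde\sigma\in\tilde F}|(\sigma-\tilde\sigma)(A)|,\ \sup_{\tilde\sigma\in\tilde F}\inf_{\sigma\in F}|(\sigma-\tilde\sigma)(A)|\}\in[0,\infty]$. For $A\in\mathcal{X}$ let $\mathcal{V}_A=\{\sigma\in\mathcal{X}^{\ast}:|\sigma(A)|<1\}$; the set of cylinders is $\mathcal{C}=\{\bigcap_{j=1}^n\mathcal{V}_{A_j}: n\in\mathbb{N},\ A_1,\dots,A_n\in\mathcal{X}\}$. For $\mathcal{V}\in\mathcal{C}$, $\mathbf{B}_{\mathcal{V}}(\mathcal{X}^{\ast})=\{B\in\mathbf{F}(\mathcal{X}^{\ast}): B\subseteq\lambda\mathcal{V}\text{ for some }\lambda>0\}$, and $\mathbf{B}(\mathcal{X}^{\ast})=\bigcap_{\mathcal{V}\in\mathcal{C}}\mathbf{B}_{\mathcal{V}}(\mathcal{X}^{\ast})$ (the nonempty bounded weak*-closed subsets). *)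

theory Defs
  imports "HOL-Analysis.Analysis" "HOL-Library.Extended_Real"
begin

definition is_tvs :: "('k::real_normed_field \<Rightarrow> 'x::{ab_group_add,t2_space} \<Rightarrow> 'x) \<Rightarrow> bool" where
  "is_tvs sc \<longleftrightarrow> Vector_Spaces.vector_space sc
     \<and> continuous_on UNIV (\<lambda>p::'x \<times> 'x. fst p + snd p)
     \<and> continuous_on UNIV (\<lambda>p::'k \<times> 'x. sc (fst p) (snd p))"

definition tdual :: "('k::real_normed_field \<Rightarrow> 'x::{ab_group_add,t2_space} \<Rightarrow> 'x) \<Rightarrow> ('x \<Rightarrow> 'k) set" where
  "tdual sc = {f. Vector_Spaces.linear sc ((*)) f \<and> continuous_on UNIV f}"

definition dual_separates_points :: "('k::real_normed_field \<Rightarrow> 'x::{ab_group_add,t2_space} \<Rightarrow> 'x) \<Rightarrow> bool" where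
  "dual_separates_points sc \<longleftrightarrow> (\<forall>x y. x \<noteq> y \<longrightarrow> (\<exists>f\<in>tdual sc. f x \<noteq> f y))"

text \<open>Weak* topology: initial topology of the evaluation maps, i.e. the subspace
  topology induced by the product (pointwise convergence) topology.\<close>
definition weak_star :: "('k::real_normed_field \<Rightarrow> 'x::{ab_group_add,t2_space} \<Rightarrow> 'x) \<Rightarrow> ('x \<Rightarrow> 'k) topology" where
  "weak_star sc = subtopology (product_topology (\<lambda>_. euclidean) UNIV) (tdual sc)"

definition Fsets :: "('k::real_normed_field \<Rightarrow> 'x::{ab_group_add,t2_space} \<Rightarrow> 'x) \<Rightarrow> ('x \<Rightarrow> 'k) set set" where
  "Fsets sc = {F. F \<noteq> {} \<and> F \<subseteq> tdual sc \<and> closedin (weak_star sc) F}"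

definition dH :: "'x \<Rightarrow> ('x \<Rightarrow> 'k::real_normed_field) set \<Rightarrow> ('x \<Rightarrow> 'k) set \<Rightarrow> ereal" where
  "dH A F G = max (SUP \<sigma>\<in>F. INF \<tau>\<in>G. ereal (norm ((\<sigma> A) - (\<tau> A))))
                  (SUP \<tau>\<in>G. INF \<sigma>\<in>F. ereal (norm ((\<sigma> A) - (\<tau> A))))"

definition cylV :: "('k::real_normed_field \<Rightarrow> 'x::{ab_group_add,t2_space} \<Rightarrow> 'x) \<Rightarrow> 'x \<Rightarrow> ('x \<Rightarrow> 'k) set" where
  "cylV sc A = {\<sigma> \<in> tdual sc. norm (\<sigma> A) < 1}"

definition cylinders :: "('k::real_normed_field \<Rightarrow> 'x::{ab_group_add,t2_space} \<Rightarrow> 'x) \<Rightarrow> ('x \<Rightarrow> 'k) set set" where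
  "cylinders sc = {(\<Inter>A\<in>As. cylV sc A) | As. finite As \<and> As \<noteq> {}}"

definition dual_scale :: "real \<Rightarrow> ('x \<Rightarrow> 'k::real_normed_field) set \<Rightarrow> ('x \<Rightarrow> 'k) set" where
  "dual_scale l V = (\<lambda>\<sigma>. \<lambda>x. of_real l * \<sigma> x) ` V"

definition BV :: "('k::real_normed_field \<Rightarrow> 'x::{ab_group_add,t2_space} \<Rightarrow> 'x) \<Rightarrow> ('x \<Rightarrow> 'k) set \<Rightarrow> ('x \<Rightarrow> 'k) set set" where
  "BV sc V = {B \<in> Fsets sc. \<exists>l>0. B \<subseteq> dual_scale l V}"

definition Bsets :: "('k::real_normed_field \<Rightarrow> 'x::{ab_group_add,t2_space} \<Rightarrow> 'x) \<Rightarrow> ('x \<Rightarrow> 'k) set set" where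
  "Bsets sc = (\<Inter>V\<in>cylinders sc. BV sc V)"

end

theory Submission
  imports Defs
begin

lemma tdual_scale:
  fixes sc :: "'k::real_normed_field \<Rightarrow> 'x::{ab_group_add,t2_space} \<Rightarrow> 'x"
  assumes "\<tau> \<in> tdual sc"
  shows "(\<lambda>x. c * \<tau> x) \<in> tdual sc"
proof -
  have lin: "Vector_Spaces.linear sc (*) \<tau>" and co: "continuous_on UNIV \<tau>"
    using assms by (auto simp: tdual_def)
  have "Vector_Spaces.linear sc (*) (\<lambda>x. c * \<tau> x)"
    using lin unfolding Vector_Spaces.linear_iff by (auto simp: distrib_left mult.left_commute)
  moreover have "continuous_on UNIV (\<lambda>x. c * \<tau> x)"
    by (intro continuous_intros co)
  ultimately show ?thesis by (simp add: tdual_def)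
qed

lemma unbounded_dir:
  fixes sc :: "'k::real_normed_field \<Rightarrow> 'x::{ab_group_add,t2_space} \<Rightarrow> 'x"
  assumes fin: "finite As" and sub: "F2 \<subseteq> tdual sc"
    and nb: "\<not> (\<exists>l>0. F2 \<subseteq> dual_scale l (\<Inter>A\<in>As. cylV sc A))"
  shows "\<exists>A\<in>As. \<forall>M. \<exists>\<tau>\<in>F2. norm (\<tau> A) \<ge> M"
proof (rule ccontr)
  assume "\<not> ?thesis"
  then have "\<forall>A\<in>As. \<exists>M. \<forall>\<tau>\<in>F2. norm (\<tau> A) < M" by (auto simp: not_le)
  then obtain M where M: "\<And>A \<tau>. A \<in> As \<Longrightarrow> \<tau> \<in> F2 \<Longrightarrow> norm (\<tau> A) < M A" by metis
  define l where "l = Max (insert 1 (M ` As))"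
  have l1: "l \<ge> 1" using fin by (simp add: l_def)
  have lM: "A \<in> As \<Longrightarrow> M A \<le> l" for A using fin by (simp add: l_def)
  have "F2 \<subseteq> dual_scale l (\<Inter>A\<in>As. cylV sc A)"
  proof
    fix \<tau> assume t: "\<tau> \<in> F2"
    define \<sigma> where "\<sigma> = (\<lambda>x. of_real (1/l) * \<tau> x)"
    have st: "\<sigma> \<in> tdual sc" unfolding \<sigma>_def using t sub tdual_scale by blast
    have "\<sigma> \<in> cylV sc A" if "A \<in> As" for A
    proof -
      have "norm (\<tau> A) < l" using M[OF that t] lM[OF that] by linarith
      then have "norm (\<sigma> A) < 1" using l1
        by (simp add: \<sigma>_def norm_mult norm_divide divide_less_eq)
      then show ?thesis using st by (simp add: cylV_def)
    qed
    moreover have "\<tau> = (\<lambda>x. of_real l * \<sigma> x)"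
      using l1 by (simp add: \<sigma>_def mult.assoc[symmetric] flip: of_real_mult)
    ultimately show "\<tau> \<in> dual_scale l (\<Inter>A\<in>As. cylV sc A)"
      unfolding dual_scale_def by blast
  qed
  then show False using nb l1 by auto
qed

lemma main_lemma:
  fixes sc :: "'k::real_normed_field \<Rightarrow> 'x::{ab_group_add,t2_space} \<Rightarrow> 'x"
  assumes fin: "finite As" and sub: "F2 \<subseteq> tdual sc"
    and F1: "F1 \<in> BV sc (\<Inter>A\<in>As. cylV sc A)"
    and nb: "\<not> (\<exists>l>0. F2 \<subseteq> dual_scale l (\<Inter>A\<in>As. cylV sc A))"
  shows "\<exists>A. dH A F1 F2 = \<infinity>"
proof -
  obtain A where A: "A \<in> As" and unb: "\<And>M. \<exists>\<tau>\<in>F2. norm (\<tau> A) \<ge> M"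
    using unbounded_dir[OF fin sub nb] by blast
  obtain l1 where l1: "l1 > 0" "F1 \<subseteq> dual_scale l1 (\<Inter>A\<in>As. cylV sc A)"
    using F1 by (auto simp: BV_def)
  have bnd: "norm (\<sigma> A) < l1" if s1: "\<sigma> \<in> F1" for \<sigma>
  proof -
    obtain \<sigma>' where "\<sigma>' \<in> cylV sc A" "\<sigma> = (\<lambda>x. of_real l1 * \<sigma>' x)"
      using l1(2) s1 A unfolding dual_scale_def by blast
    then show ?thesis using l1(1)
      by (simp add: cylV_def norm_mult)
  qed
  have "(SUP \<tau>\<in>F2. INF \<sigma>\<in>F1. ereal (norm (\<sigma> A - \<tau> A))) = \<infinity>"
  proof (rule ereal_top)
    fix B
    obtain \<tau> where t: "\<tau> \<in> F2" "norm (\<tau> A) \<ge> B + l1" using unb by blast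
    have "ereal B \<le> (INF \<sigma>\<in>F1. ereal (norm (\<sigma> A - \<tau> A)))"
    proof (rule INF_greatest)
      fix \<sigma> assume s: "\<sigma> \<in> F1"
      have "norm (\<tau> A) \<le> norm (\<sigma> A - \<tau> A) + norm (\<sigma> A)"
        by (metis norm_minus_commute norm_triangle_sub add.commute)
      then show "ereal B \<le> ereal (norm (\<sigma> A - \<tau> A))" using bnd[OF s] t(2) by simp
    qed
    then show "ereal B \<le> (SUP \<tau>\<in>F2. INF \<sigma>\<in>F1. ereal (norm (\<sigma> A - \<tau> A)))"
      using t(1) by (meson SUP_upper2)
  qed
  then have "dH A F1 F2 = \<infinity>" by (simp add: dH_def)
  then show ?thesis by blast
qed

lemma general:
  fixes sc :: "'k::real_normed_field \<Rightarrow> 'x::{ab_group_add,t2_space} \<Rightarrow> 'x"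
  shows "(\<forall>V1\<in>cylinders sc. \<forall>V2\<in>cylinders sc. BV sc V1 \<subset> BV sc V2 \<longrightarrow>
               (\<forall>F1\<in>BV sc V1. \<forall>F2\<in>BV sc V2 - BV sc V1. \<exists>A. dH A F1 F2 = \<infinity>))
          \<and> (\<forall>B\<in>Bsets sc. \<forall>F\<in>Fsets sc - Bsets sc. \<exists>A. dH A B F = \<infinity>)"
proof (intro conjI ballI impI)
  fix V1 V2 F1 F2
  assume V1: "V1 \<in> cylinders sc" and F1: "F1 \<in> BV sc V1" and F2: "F2 \<in> BV sc V2 - BV sc V1"
  obtain As where As: "finite As" "V1 = (\<Inter>A\<in>As. cylV sc A)"
    using V1 by (auto simp: cylinders_def)
  have sub: "F2 \<subseteq> tdual sc" using F2 by (auto simp: BV_def Fsets_def)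
  have "\<not> (\<exists>l>0. F2 \<subseteq> dual_scale l V1)" using F2 by (auto simp: BV_def)
  then show "\<exists>A. dH A F1 F2 = \<infinity>" using main_lemma[OF As(1) sub] F1 As(2) by blast
next
  fix B F assume B: "B \<in> Bsets sc" and F: "F \<in> Fsets sc - Bsets sc"
  obtain V where V: "V \<in> cylinders sc" "F \<notin> BV sc V" using F by (auto simp: Bsets_def)
  have BV: "B \<in> BV sc V" using B V(1) by (auto simp: Bsets_def)
  obtain As where As: "finite As" "V = (\<Inter>A\<in>As. cylV sc A)"
    using V(1) by (auto simp: cylinders_def)
  have sub: "F \<subseteq> tdual sc" using F by (auto simp: Fsets_def)
  have "\<not> (\<exists>l>0. F \<subseteq> dual_scale l V)" using V(2) F by (auto simp: BV_def)
  then show "\<exists>A. dH A B F = \<infinity>" using main_lemma[OF As(1) sub] BV As(2) by blast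
qed

theorem proposition3p2:
  fixes sR :: "real \<Rightarrow> 'x::{ab_group_add,t2_space} \<Rightarrow> 'x"
    and sC :: "complex \<Rightarrow> 'y::{ab_group_add,t2_space} \<Rightarrow> 'y"
  shows "(is_tvs sR \<and> dual_separates_points sR \<longrightarrow>
            (\<forall>V1\<in>cylinders sR. \<forall>V2\<in>cylinders sR. BV sR V1 \<subset> BV sR V2 \<longrightarrow>
               (\<forall>F1\<in>BV sR V1. \<forall>F2\<in>BV sR V2 - BV sR V1. \<exists>A. dH A F1 F2 = \<infinity>))
          \<and> (\<forall>B\<in>Bsets sR. \<forall>F\<in>Fsets sR - Bsets sR. \<exists>A. dH A B F = \<infinity>))
       \<and> (is_tvs sC \<and> dual_separates_points sC \<longrightarrow>
            (\<forall>V1\<in>cylinders sC. \<forall>V2\<in>cylinders sC. BV sC V1 \<subset> BV sC V2 \<longrightarrow>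
               (\<forall>F1\<in>BV sC V1. \<forall>F2\<in>BV sC V2 - BV sC V1. \<exists>A. dH A F1 F2 = \<infinity>))
          \<and> (\<forall>B\<in>Bsets sC. \<forall>F\<in>Fsets sC - Bsets sC. \<exists>A. dH A B F = \<infinity>))"
  using general[of sR] general[of sC] by blast

end
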